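(* Let $T$ be a finite rooted tree. For each vertex $v$ of $T$ let $n_v$ be the number of vertices of the subtree $T_v$ rooted at $v$, and let $v_1,\dots,v_{\deg(v)}$ be the children of $v$. Define $C_v(x)\in\mathbb{Z}[x]$ inductively by $C_v(x)=x+2$ if $v$ is a leaf, and $C_v(x)=x^{n_v}+2x\prod_{i=1}^{\deg(v)}C_{v_i}(x)+2$ if $v$ is an internal node. Then for every vertex $v$ of $T$, $C_v(x)$ is irreducible over $\mathbb{Q}$.
   Context: $T_v$ consists of $v$ and all its descendants; $\deg(v)$ denotes the number of children of $v$. *)

theory Defs
  imports "HOL-Computational_Algebra.Polynomial_Factorial"
begin

datatype rtree = Node "rtree list"

fun children :: "rtree \<Rightarrow> rtree list" where
  "children (Node ts) = ts"

fun nverts :: "rtree \<Rightarrow> nat" where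
  "nverts (Node ts) = 1 + sum_list (map nverts ts)"

text \<open>The subtrees T_v, for v ranging over the vertices of the tree.\<close>
fun subtrees :: "rtree \<Rightarrow> rtree set" where
  "subtrees (Node ts) = insert (Node ts) (\<Union> (set (map subtrees ts)))"

fun Cpoly :: "rtree \<Rightarrow> int poly" where
  "Cpoly (Node ts) =
     (if ts = [] then [:2, 1:]
      else monom 1 (nverts (Node ts)) + smult 2 ([:0, 1:] * prod_list (map Cpoly ts)) + [:2:])"

end

theory Submission
  imports Defs "Berlekamp_Zassenhaus.Factor_Bound"
begin

lemma eis:
  fixes p g h :: "int poly"
  assumes pgh: "p = g * h" and dg: "degree g > 0" and dh: "degree h > 0"
    and lc: "odd (Polynomial.coeff p (degree p))"
    and low: "\<forall>k<degree p. even (Polynomial.coeff p k)"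
    and c0: "Polynomial.coeff p 0 = 2"
  shows False
proof -
  have g0: "g \<noteq> 0" and h0: "h \<noteq> 0" using dg dh by auto
  have dp: "degree p = degree g + degree h" using pgh g0 h0 degree_mult_eq by blast
  have "Polynomial.coeff p (degree p) = Polynomial.coeff g (degree g) * Polynomial.coeff h (degree h)"
    using pgh dp by (simp add: coeff_mult_degree_sum)
  with lc have og: "odd (Polynomial.coeff g (degree g))" and oh: "odd (Polynomial.coeff h (degree h))" by auto
  define i where "i = (LEAST k. odd (Polynomial.coeff g k))"
  define j where "j = (LEAST k. odd (Polynomial.coeff h k))"
  have gi: "odd (Polynomial.coeff g i)" unfolding i_def using og by (rule LeastI)
  have hj: "odd (Polynomial.coeff h j)" unfolding j_def using oh by (rule LeastI)
  have ile: "i \<le> degree g" unfolding i_def using og by (rule Least_le)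
  have jle: "j \<le> degree h" unfolding j_def using oh by (rule Least_le)
  have gk: "even (Polynomial.coeff g k)" if "k < i" for k using that not_less_Least unfolding i_def by blast
  have hk: "even (Polynomial.coeff h k)" if "k < j" for k using that not_less_Least unfolding j_def by blast
  have "Polynomial.coeff p (i+j) = (\<Sum>k\<le>i+j. Polynomial.coeff g k * Polynomial.coeff h (i+j-k))"
    using pgh by (simp add: coeff_mult)
  also have "\<dots> = Polynomial.coeff g i * Polynomial.coeff h (i+j-i) + (\<Sum>k\<in>{..i+j}-{i}. Polynomial.coeff g k * Polynomial.coeff h (i+j-k))"
    by (rule sum.remove) auto
  finally have eq: "Polynomial.coeff p (i+j) = Polynomial.coeff g i * Polynomial.coeff h j + (\<Sum>k\<in>{..i+j}-{i}. Polynomial.coeff g k * Polynomial.coeff h (i+j-k))"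
    by simp
  have "even (\<Sum>k\<in>{..i+j}-{i}. Polynomial.coeff g k * Polynomial.coeff h (i+j-k))"
  proof (rule dvd_sum)
    fix k assume "k \<in> {..i+j}-{i}"
    then have "k < i \<or> (k > i \<and> i+j-k < j)" by auto
    then show "even (Polynomial.coeff g k * Polynomial.coeff h (i+j-k))" using gk hk by auto
  qed
  with eq gi hj have odd: "odd (Polynomial.coeff p (i+j))" by auto
  have "i + j = degree p"
  proof (rule ccontr)
    assume "i + j \<noteq> degree p"
    then consider "i + j < degree p" | "i + j > degree p" by linarith
    then show False
    proof cases
      case 1 then show False using low odd by auto
    next
      case 2 then have "Polynomial.coeff p (i+j) = 0" by (simp add: coeff_eq_0)
      then show False using odd by simp
    qed
  qed
  then have "i = degree g" "j = degree h" using ile jle dp by auto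
  then have "even (Polynomial.coeff g 0)" "even (Polynomial.coeff h 0)" using gk hk dg dh by auto
  then have "4 dvd Polynomial.coeff g 0 * Polynomial.coeff h 0" by (auto elim!: evenE)
  moreover have "Polynomial.coeff p 0 = Polynomial.coeff g 0 * Polynomial.coeff h 0" using pgh by (simp add: coeff_mult)
  ultimately show False using c0 by simp
qed

lemma degree_prod_list_le':
  fixes xs :: "int poly list"
  shows "degree (prod_list xs) \<le> sum_list (map degree xs)"
proof (induction xs)
  case Nil then show ?case by simp
next
  case (Cons x xs)
  have "degree (prod_list (x#xs)) \<le> degree x + degree (prod_list xs)"
    by (simp add: degree_mult_le)
  with Cons show ?case by simp
qed

lemma props:
  "degree (Cpoly t) = nverts t \<and> odd (Polynomial.coeff (Cpoly t) (nverts t)) \<and>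
   (\<forall>k<nverts t. even (Polynomial.coeff (Cpoly t) k)) \<and> Polynomial.coeff (Cpoly t) 0 = 2 \<and> nverts t > 0"
proof (induction t rule: Cpoly.induct)
  case (1 ts)
  show ?case
  proof (cases "ts = []")
    case True
    then show ?thesis by auto
  next
    case False
    define P where "P = prod_list (map Cpoly ts)"
    define n where "n = nverts (Node ts)"
    have IH: "degree (Cpoly t) = nverts t" if "t \<in> set ts" for t
      using 1 False that by blast
    have "sum_list (map degree (map Cpoly ts)) = sum_list (map nverts ts)"
      using IH by (induction ts) auto
    then have dP: "degree P \<le> n - 1" unfolding P_def n_def
      using degree_prod_list_le'[of "map Cpoly ts"] by simp
    have n1: "n \<ge> 1" unfolding n_def by simp
    have x: "[:0,1:] * P = pCons 0 P" by simp
    have C: "Cpoly (Node ts) = Polynomial.monom 1 n + Polynomial.smult 2 (pCons 0 P) + [:2:]"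
      using False x unfolding P_def n_def by simp
    have cf: "Polynomial.coeff (Cpoly (Node ts)) k = (if n = k then 1 else 0) + 2 * Polynomial.coeff (pCons 0 P) k + (if k = 0 then 2 else 0)" for k
      unfolding C by (cases k) (simp_all add: coeff_monom)
    have dp0: "degree (pCons 0 P) \<le> n"
      using dP n1 by (cases "P = 0") auto
    have dp0: "degree (pCons 0 P) \<le> n"
      using dP n1 degree_pCons_le[of 0 P] by linarith
    have "degree (Cpoly (Node ts)) \<le> n"
    proof -
      have d1: "degree (Polynomial.monom 1 n :: int poly) \<le> n" by (rule degree_monom_le)
      have d2: "degree (Polynomial.smult 2 (pCons 0 P)) \<le> n"
        using degree_smult_le[of 2 "pCons 0 P"] dp0 by linarith
      have d3: "degree [:2::int:] \<le> n" by simp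
      show ?thesis unfolding C by (intro degree_add_le d1 d2 d3)
    qed
    moreover have cn: "odd (Polynomial.coeff (Cpoly (Node ts)) n)" using cf[of n] n1 by simp
    moreover have "Polynomial.coeff (Cpoly (Node ts)) n \<noteq> 0" using cn by (metis even_zero)
    ultimately have deg: "degree (Cpoly (Node ts)) = n" using le_degree by (meson le_antisym)
    have "Polynomial.coeff (Cpoly (Node ts)) 0 = 2" using cf[of 0] n1 by simp
    moreover have "\<forall>k<n. even (Polynomial.coeff (Cpoly (Node ts)) k)" using cf by auto
    ultimately show ?thesis using deg cn n1 unfolding n_def by auto
  qed
qed

theorem mainTheorem2:
  fixes T v :: rtree
  assumes "v \<in> subtrees T"
  shows "irreducible (map_poly (of_int :: int \<Rightarrow> rat) (Cpoly v))"
proof -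
  let ?p = "Cpoly v"
  have pr: "degree ?p = nverts v" "odd (Polynomial.coeff ?p (nverts v))"
    "\<forall>k<nverts v. even (Polynomial.coeff ?p k)" "Polynomial.coeff ?p 0 = 2" "nverts v > 0"
    using props[of v] by auto
  have "irreducible\<^sub>d (map_poly rat_of_int ?p)"
  proof (rule irreducible\<^sub>dI)
    show "degree (map_poly rat_of_int ?p) > 0" using pr by simp
  next
    fix q r :: "rat poly"
    assume "degree q > 0" "degree q < degree (map_poly rat_of_int ?p)"
      "degree r > 0" "degree r < degree (map_poly rat_of_int ?p)"
      and qr: "map_poly rat_of_int ?p = q * r"
    from rat_to_int_factor[OF qr] obtain g h where
      "?p = g * h" "degree g = degree q" "degree h = degree r" by blast
    then show False using eis[of ?p g h] pr \<open>degree q > 0\<close> \<open>degree r > 0\<close> by auto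
  qed
  then show ?thesis by simp
qed

end
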